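(* Suppose a node $v$ of degree at least $3$ is deleted from a network and the healing responds by adding new edges (not previously present) only between former neighbors of $v$ such that the added edges form a connected graph on the set of former neighbors of $v$. Then, however the healing edges are chosen, at least one node has degree after the deletion and healing at least $1$ larger than its degree before the deletion.
   Context: Networks are undirected graphs; deleting a node removes it and all its incident edges. *)

theory Defs
  imports Main
begin

definition simple_graph :: "'a set \<Rightarrow> ('a \<Rightarrow> 'a \<Rightarrow> bool) \<Rightarrow> bool" where
  "simple_graph V E \<longleftrightarrow> finite V \<and> (\<forall>x y. E x y \<longrightarrow> x \<in> V \<and> y \<in> V)
     \<and> (\<forall>x y. E x y \<longrightarrow> E y x) \<and> (\<forall>x. \<not> E x x)"

definition nbrs :: "('a \<Rightarrow> 'a \<Rightarrow> bool) \<Rightarrow> 'a \<Rightarrow> 'a set" where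
  "nbrs E x = {y. E x y}"

definition degree :: "('a \<Rightarrow> 'a \<Rightarrow> bool) \<Rightarrow> 'a \<Rightarrow> nat" where
  "degree E x = card (nbrs E x)"

definition healed :: "('a \<Rightarrow> 'a \<Rightarrow> bool) \<Rightarrow> 'a \<Rightarrow> ('a \<Rightarrow> 'a \<Rightarrow> bool) \<Rightarrow> 'a \<Rightarrow> 'a \<Rightarrow> bool" where
  "healed E v H x y \<longleftrightarrow> (x \<noteq> v \<and> y \<noteq> v \<and> E x y) \<or> H x y"

definition valid_healing :: "('a \<Rightarrow> 'a \<Rightarrow> bool) \<Rightarrow> 'a \<Rightarrow> ('a \<Rightarrow> 'a \<Rightarrow> bool) \<Rightarrow> bool" where
  "valid_healing E v H \<longleftrightarrow>
     (\<forall>x y. H x y \<longrightarrow> x \<in> nbrs E v \<and> y \<in> nbrs E v \<and> \<not> E x y)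
     \<and> (\<forall>x y. H x y \<longrightarrow> H y x) \<and> (\<forall>x. \<not> H x x)
     \<and> (\<forall>x\<in>nbrs E v. \<forall>y\<in>nbrs E v. H\<^sup>*\<^sup>* x y)"

end

theory Submission
  imports Defs
begin

lemma closed_pair:
  assumes "H\<^sup>*\<^sup>* a y" and "\<And>x. H a x \<Longrightarrow> x = b" and "\<And>x. H b x \<Longrightarrow> x = a"
  shows "y \<in> {a, b}"
  using assms(1) by (induction rule: rtranclp_induct) (auto dest: assms(2,3))

lemma branch:
  assumes vh: "valid_healing E v H" and c3: "card (nbrs E v) \<ge> 3"
  shows "\<exists>u y z. H u y \<and> H u z \<and> y \<noteq> z"
proof (rule ccontr)
  assume no: "\<not> ?thesis"
  from c3 obtain a c d where abc: "a \<in> nbrs E v" "c \<in> nbrs E v" "d \<in> nbrs E v"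
      "a \<noteq> c" "a \<noteq> d" "c \<noteq> d"
  proof -
    have "finite (nbrs E v)" using c3 by (metis card.infinite not_numeral_le_zero)
    from c3 obtain S where "S \<subseteq> nbrs E v" "card S = 3"
      by (meson obtain_subset_with_card_n)
    then obtain p q r where "S = {p, q, r}" "p \<noteq> q" "p \<noteq> r" "q \<noteq> r"
      by (metis card_3_iff)
    then show ?thesis using that \<open>S \<subseteq> nbrs E v\<close> by blast
  qed
  have conn: "H\<^sup>*\<^sup>* a c" using vh abc unfolding valid_healing_def by blast
  then obtain b where hab: "H a b"
    using abc(4) by (metis converse_rtranclpE)
  have s: "\<And>x y. H x y \<Longrightarrow> H y x" using vh unfolding valid_healing_def by blast
  have uni: "\<And>u y z. H u y \<Longrightarrow> H u z \<Longrightarrow> y = z" using no by blast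
  have "H b a" using s hab .
  have c1: "\<And>x. H a x \<Longrightarrow> x = b" using uni hab by blast
  have c2: "\<And>x. H b x \<Longrightarrow> x = a" using uni \<open>H b a\<close> by blast
  have "c \<in> {a,b}" using closed_pair[OF conn c1 c2] .
  moreover have "H\<^sup>*\<^sup>* a d" using vh abc unfolding valid_healing_def by blast
  hence "d \<in> {a,b}" using closed_pair[OF _ c1 c2] by blast
  ultimately show False using abc by auto
qed

theorem lemma11:
  fixes V :: "'a set" and E H :: "'a \<Rightarrow> 'a \<Rightarrow> bool" and v :: 'a
  assumes "simple_graph V E"
    and "v \<in> V"
    and "degree E v \<ge> 3"
    and "valid_healing E v H"
  shows "\<exists>u \<in> V - {v}. degree (healed E v H) u \<ge> degree E u + 1"
proof -
  have c3: "card (nbrs E v) \<ge> 3" using assms(3) by (simp add: degree_def)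
  obtain u y z where h: "H u y" "H u z" "y \<noteq> z" using branch[OF assms(4) c3] by blast
  have vh: "\<forall>x y. H x y \<longrightarrow> x \<in> nbrs E v \<and> y \<in> nbrs E v \<and> \<not> E x y"
    using assms(4) unfolding valid_healing_def by blast
  have g: "finite V" "\<forall>x y. E x y \<longrightarrow> x \<in> V \<and> y \<in> V" "\<forall>x y. E x y \<longrightarrow> E y x" "\<forall>x. \<not> E x x"
    using assms(1) unfolding simple_graph_def by auto
  have uN: "E v u" using vh h by (simp add: nbrs_def)
  hence uV: "u \<in> V" "u \<noteq> v" using g(2,4) by blast+
  have Evu: "E u v" using g(3) uN by blast
  have "nbrs E u \<subseteq> V" using g(2) by (auto simp: nbrs_def)
  hence fin: "finite (nbrs E u)" using g(1) by (rule finite_subset)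
  let ?A = "nbrs E u - {v}"
  have cA: "card ?A = degree E u - 1" using Evu fin by (simp add: degree_def nbrs_def)
  have sub: "?A \<union> {y, z} \<subseteq> nbrs (healed E v H) u"
    using h uV by (auto simp: nbrs_def healed_def)
  have finH: "finite (nbrs (healed E v H) u)"
    proof (rule finite_subset[OF _ g(1)])
    show "nbrs (healed E v H) u \<subseteq> V"
    proof
      fix x assume "x \<in> nbrs (healed E v H) u"
      hence "E u x \<or> H u x" by (auto simp: nbrs_def healed_def)
      thus "x \<in> V" using g(2) vh by (auto simp: nbrs_def)
    qed
  qed
  have disj: "?A \<inter> {y, z} = {}" using vh h by (auto simp: nbrs_def)
  have "card (?A \<union> {y, z}) = card ?A + 2"
    using disj fin h(3) by (subst card_Un_disjoint) auto
  hence "card ?A + 2 \<le> degree (healed E v H) u"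
    using card_mono[OF finH sub] by (simp add: degree_def)
  moreover have "degree E u \<ge> 1" using Evu fin
    by (auto simp: degree_def nbrs_def card_gt_0_iff Suc_le_eq)
  ultimately show ?thesis using cA uV by (intro bexI[of _ u]) auto
qed

end
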